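(* Let $\mathcal N$ be a network with a binary collision profile and character $D^*$. For every integer $T\ge\max(D^*,1)$, $\mathcal R^{(\mathcal M_T,\mathcal E_T)}\subseteq\mathcal R^{\mathcal N}$ (and hence, together with $\mathcal R^{\mathcal N}\subseteq\mathcal R^{(\mathcal M_T,\mathcal E_T)}$, equality holds).
   Context: A network is a triple $\mathcal N=(\mathcal L,\mathcal I,D_{\mathcal L})$ where $\mathcal L$ is a finite nonempty set of links, each $\mathcal I(l)$ is a collection of nonempty subsets of $\mathcal L$, and $D_{\mathcal L}$ assigns an integer $D_{\mathcal L}(l,l')$ to every pair with $l'\in\phi$ for some $\phi\in\mathcal I(l)$. The profile is binary if every $\phi\in\mathcal I(l)$ is a singleton. The character is $D^*=\max_{l}\max_{\phi\in\mathcal I(l)}\max_{l'\in\phi}|D_{\mathcal L}(l,l')|$ (0 if there are no collision sets). A schedule is a map $S:\mathcal L\times\mathbb Z\to\{0,1\}$; $S(l,t)$ has a collision if there is $\phi\in\mathcal I(l)$ with $S(l',t+D_{\mathcal L}(l,l'))=1$ for all $l'\in\phi$; $S$ is collision free if no $(l,t)$ with $S(l,t)=1$ has a collision. $R_S(l)=\lim_{T\to\infty}\frac1T\sum_{t=0}^{T-1}\iota\big(S(l,t)=1\text{ and collision free}\big)$ when it exists; $R_S=(R_S(l))_l$. A nonnegative vector $R\in[0,\infty)^{\mathcal L}$ is achievable if for every $\epsilon>0$ some schedule $S$ has a rate vector with $R_S(l)\ge R(l)-\epsilon$ for all $l$; $\mathcal R^{\mathcal N}$ is the set of achievable nonnegative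 vectors. $S[T,k]$ is the $|\mathcal L|\times T$ binary matrix with $S[T,k](l,j)=S(l,kT+j)$. The scheduling graph $(\mathcal M_T,\mathcal E_T)$ has vertex set $\mathcal M_T$ = all $|\mathcal L|\times T$ binary matrices $A$ with $A=S[T,0]$ for some collision-free schedule $S$, and edge set $\mathcal E_T$ = all pairs $(A,B)$ with $A=S[T,0]$, $B=S[T,1]$ for some collision-free $S$. A cycle is a sequence $(A_0,\dots,A_k)$, $k\ge1$, with $(A_i,A_{i+1})\in\mathcal E_T$, $A_k=A_0$, and $A_0,\dots,A_{k-1}$ pairwise distinct; its rate vector is $R_C=\frac{1}{kT}\sum_{i=0}^{k-1}A_i\mathbf 1$. $\mathcal R^{(\mathcal M_T,\mathcal E_T)}$ is the convex hull of the rate vectors of all cycles. *)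

theory Defs
  imports "HOL-Analysis.Analysis"
begin

text \<open>A network over a finite (nonempty) type of links 'l is given by the
collision profile I :: 'l => 'l set set and the delays D :: 'l => 'l => int
(only the values D l l' with l' in some phi in I l are relevant).
Schedules are maps 'l => int => bool (True = 1).\<close>

definition wf_network :: "('l \<Rightarrow> 'l set set) \<Rightarrow> bool" where
  "wf_network I \<longleftrightarrow> (\<forall>l. \<forall>\<phi>\<in>I l. \<phi> \<noteq> {})"

definition binary_profile :: "('l \<Rightarrow> 'l set set) \<Rightarrow> bool" where
  "binary_profile I \<longleftrightarrow> (\<forall>l. \<forall>\<phi>\<in>I l. \<exists>l'. \<phi> = {l'})"

definition character :: "('l::finite \<Rightarrow> 'l set set) \<Rightarrow> ('l \<Rightarrow> 'l \<Rightarrow> int) \<Rightarrow> nat" where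
  "character I D = Max (insert 0 {nat \<bar>D l l'\<bar> | l \<phi> l'. \<phi> \<in> I l \<and> l' \<in> \<phi>})"

definition has_collision ::
  "('l \<Rightarrow> 'l set set) \<Rightarrow> ('l \<Rightarrow> 'l \<Rightarrow> int) \<Rightarrow> ('l \<Rightarrow> int \<Rightarrow> bool) \<Rightarrow> 'l \<Rightarrow> int \<Rightarrow> bool" where
  "has_collision I D S l t \<longleftrightarrow> (\<exists>\<phi>\<in>I l. \<forall>l'\<in>\<phi>. S l' (t + D l l'))"

definition collision_free ::
  "('l \<Rightarrow> 'l set set) \<Rightarrow> ('l \<Rightarrow> 'l \<Rightarrow> int) \<Rightarrow> ('l \<Rightarrow> int \<Rightarrow> bool) \<Rightarrow> bool" where
  "collision_free I D S \<longleftrightarrow> (\<forall>l t. S l t \<longrightarrow> \<not> has_collision I D S l t)"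

definition avg_success ::
  "('l \<Rightarrow> 'l set set) \<Rightarrow> ('l \<Rightarrow> 'l \<Rightarrow> int) \<Rightarrow> ('l \<Rightarrow> int \<Rightarrow> bool) \<Rightarrow> 'l \<Rightarrow> nat \<Rightarrow> real" where
  "avg_success I D S l T =
     (1 / real T) * (\<Sum>t<T. if S l (int t) \<and> \<not> has_collision I D S l (int t) then 1 else 0)"

definition is_rate_vector ::
  "('l::finite \<Rightarrow> 'l set set) \<Rightarrow> ('l \<Rightarrow> 'l \<Rightarrow> int) \<Rightarrow> ('l \<Rightarrow> int \<Rightarrow> bool) \<Rightarrow> real^'l \<Rightarrow> bool" where
  "is_rate_vector I D S R \<longleftrightarrow> (\<forall>l. avg_success I D S l \<longlonglongrightarrow> R $ l)"

definition achievable_region ::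
  "('l::finite \<Rightarrow> 'l set set) \<Rightarrow> ('l \<Rightarrow> 'l \<Rightarrow> int) \<Rightarrow> (real^'l) set" where
  "achievable_region I D =
     {R. (\<forall>l. 0 \<le> R $ l) \<and>
         (\<forall>\<epsilon>>0. \<exists>S RS. is_rate_vector I D S RS \<and> (\<forall>l. RS $ l \<ge> R $ l - \<epsilon>))}"

text \<open>The |L| x T binary matrix S[T,k]; a matrix is a map 'l => nat => bool whose
entries at columns j >= T are False (so it is determined by its |L| x T block).\<close>
definition block :: "('l \<Rightarrow> int \<Rightarrow> bool) \<Rightarrow> nat \<Rightarrow> int \<Rightarrow> 'l \<Rightarrow> nat \<Rightarrow> bool" where
  "block S T k = (\<lambda>l j. j < T \<and> S l (k * int T + int j))"

definition sched_vertices ::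
  "('l \<Rightarrow> 'l set set) \<Rightarrow> ('l \<Rightarrow> 'l \<Rightarrow> int) \<Rightarrow> nat \<Rightarrow> ('l \<Rightarrow> nat \<Rightarrow> bool) set" where
  "sched_vertices I D T = {block S T 0 | S. collision_free I D S}"

definition sched_edges ::
  "('l \<Rightarrow> 'l set set) \<Rightarrow> ('l \<Rightarrow> 'l \<Rightarrow> int) \<Rightarrow> nat \<Rightarrow> (('l \<Rightarrow> nat \<Rightarrow> bool) \<times> ('l \<Rightarrow> nat \<Rightarrow> bool)) set" where
  "sched_edges I D T = {(block S T 0, block S T 1) | S. collision_free I D S}"

text \<open>A cycle (A_0,...,A_k), k >= 1, given as the list [A_0,...,A_k].\<close>
definition is_cycle ::
  "('l \<Rightarrow> 'l set set) \<Rightarrow> ('l \<Rightarrow> 'l \<Rightarrow> int) \<Rightarrow> nat \<Rightarrow> ('l \<Rightarrow> nat \<Rightarrow> bool) list \<Rightarrow> bool" where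
  "is_cycle I D T As \<longleftrightarrow>
     length As \<ge> 2 \<and>
     (\<forall>i. i + 1 < length As \<longrightarrow> (As ! i, As ! (i + 1)) \<in> sched_edges I D T) \<and>
     last As = hd As \<and> distinct (butlast As)"

definition cycle_rate :: "nat \<Rightarrow> ('l::finite \<Rightarrow> nat \<Rightarrow> bool) list \<Rightarrow> real^'l" where
  "cycle_rate T As =
     (let k = length As - 1 in
      \<chi> l. (1 / (real k * real T)) * (\<Sum>i<k. real (card {j. j < T \<and> (As ! i) l j})))"

definition graph_region ::
  "('l::finite \<Rightarrow> 'l set set) \<Rightarrow> ('l \<Rightarrow> 'l \<Rightarrow> int) \<Rightarrow> nat \<Rightarrow> (real^'l) set" where
  "graph_region I D T = convex hull {cycle_rate T As | As. is_cycle I D T As}"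

end

theory Submission
  imports Defs
begin


lemma cf_mono:
  assumes "collision_free I D S" "\<And>l t. S' l t \<Longrightarrow> S l t"
  shows "collision_free I D S'"
  using assms unfolding collision_free_def has_collision_def by blast

lemma edgeI: "collision_free I D S \<Longrightarrow> (block S T 0, block S T 1) \<in> sched_edges I D T"
  unfolding sched_edges_def by blast

definition Zb :: "'l \<Rightarrow> nat \<Rightarrow> bool" where "Zb = (\<lambda>l j. False)"

lemma edge_Z1:
  assumes "(A,B) \<in> sched_edges I D T"
  shows "(A,Zb) \<in> sched_edges I D T"
proof -
  obtain S where S: "collision_free I D S" "A = block S T 0" "B = block S T 1"
    using assms unfolding sched_edges_def by auto
  define S' where "S' = (\<lambda>l t. t < int T \<and> S l t)"
  have "collision_free I D S'" by (rule cf_mono[OF S(1)]) (auto simp: S'_def)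
  moreover have "block S' T 0 = A" using S(2) by (auto simp: block_def S'_def fun_eq_iff)
  moreover have "block S' T 1 = Zb" by (auto simp: block_def S'_def fun_eq_iff Zb_def)
  ultimately show ?thesis using edgeI[of I D S' T] by simp
qed

lemma edge_Z2:
  assumes "(A,B) \<in> sched_edges I D T"
  shows "(Zb,B) \<in> sched_edges I D T"
proof -
  obtain S where S: "collision_free I D S" "A = block S T 0" "B = block S T 1"
    using assms unfolding sched_edges_def by auto
  define S' where "S' = (\<lambda>l t. t \<ge> int T \<and> S l t)"
  have "collision_free I D S'" by (rule cf_mono[OF S(1)]) (auto simp: S'_def)
  moreover have "block S' T 0 = Zb" by (auto simp: block_def S'_def fun_eq_iff Zb_def)
  moreover have "block S' T 1 = B" using S(3) by (auto simp: block_def S'_def fun_eq_iff)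
  ultimately show ?thesis using edgeI[of I D S' T] by simp
qed

lemma edge_ZZ: "(Zb,Zb) \<in> sched_edges I D T"
proof -
  define S0 :: "'a \<Rightarrow> int \<Rightarrow> bool" where "S0 = (\<lambda>l t. False)"
  have "collision_free I D S0" by (simp add: collision_free_def S0_def)
  moreover have "block S0 T 0 = Zb" "block S0 T 1 = Zb"
    by (auto simp: block_def fun_eq_iff Zb_def S0_def)
  ultimately show ?thesis using edgeI[of I D S0 T] by simp
qed

lemma character_bound:
  fixes I :: "'l::finite \<Rightarrow> 'l set set"
  assumes "\<phi> \<in> I l" "l' \<in> \<phi>"
  shows "nat \<bar>D l l'\<bar> \<le> character I D"
proof -
  have fin: "finite {nat \<bar>D l l'\<bar> | l \<phi> l'. \<phi> \<in> I l \<and> l' \<in> \<phi>}"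
    by (rule finite_subset[of _ "(\<lambda>(l,l'). nat \<bar>D l l'\<bar>) ` UNIV"]) auto
  show ?thesis unfolding character_def
    by (rule Max_ge) (use fin assms in auto)
qed



definition schedW :: "nat \<Rightarrow> (int \<Rightarrow> 'l \<Rightarrow> nat \<Rightarrow> bool) \<Rightarrow> 'l \<Rightarrow> int \<Rightarrow> bool" where
  "schedW T W = (\<lambda>l t. W (t div int T) l (nat (t mod int T)))"

lemma block0: "j < T \<Longrightarrow> block S T 0 l j = S l (int j)"
  by (simp add: block_def)
lemma block1: "j < T \<Longrightarrow> block S T 1 l j = S l (int T + int j)"
  by (simp add: block_def)

lemma divmod_aux:
  fixes T :: int
  assumes "0 \<le> s" "s < T"
  shows "(m * T + s) div T = m" "(m * T + s) mod T = s"
  using assms by (simp_all add: add.commute)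

lemma schedW_cf:
  fixes I :: "'l::finite \<Rightarrow> 'l set set"
  assumes bin: "binary_profile I" and TD: "character I D \<le> T" and T1: "1 \<le> T"
    and E: "\<And>m. (W m, W (m+1)) \<in> sched_edges I D T"
  shows "collision_free I D (schedW T W)"
  unfolding collision_free_def
proof (intro allI impI notI)
  fix l t
  let ?S = "schedW T W"
  assume act: "?S l t" and col: "has_collision I D ?S l t"
  then obtain \<phi> where phi: "\<phi> \<in> I l" "\<forall>l'\<in>\<phi>. ?S l' (t + D l l')"
    unfolding has_collision_def by blast
  then obtain l' where l': "\<phi> = {l'}" using bin unfolding binary_profile_def by blast
  define d where "d = D l l'"
  have Sd: "?S l' (t + d)" using phi l' d_def by auto
  have dT: "\<bar>d\<bar> \<le> int T" using character_bound[of \<phi> I l l' D] phi(1) l' TD d_def by auto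
  define m where "m = t div int T"
  define r where "r = t mod int T"
  have r: "0 \<le> r" "r < int T" using T1 by (auto simp: r_def)
  have t: "t = m * int T + r" by (simp add: m_def r_def)
  have Sl: "W m l (nat r)" using act by (simp add: schedW_def m_def r_def)
  have key: "\<And>S' c. collision_free I D S' \<Longrightarrow> S' l (t - c) \<Longrightarrow> S' l' (t + d - c) \<Longrightarrow> False"
  proof -
    fix S' c assume cf: "collision_free I D S'" and a: "S' l (t - c)" and b: "S' l' (t + d - c)"
    have "has_collision I D S' l (t - c)" unfolding has_collision_def
      using phi(1) l' b d_def by (auto simp: algebra_simps)
    with cf a show False unfolding collision_free_def by blast
  qed
  show False
  proof (cases "t + d \<ge> m * int T")
    case True
    obtain S' where S': "collision_free I D S'" "W m = block S' T 0" "W (m+1) = block S' T 1"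
      using E[of m] unfolding sched_edges_def by auto
    have a: "S' l (t - m * int T)"
      using Sl S'(2) block0[of "nat r" T S' l] r by (simp add: t)
    define s where "s = t + d - m * int T"
    have s: "0 \<le> s" "s < 2 * int T" using True dT r by (auto simp: s_def t)
    have b: "S' l' s"
    proof (cases "s < int T")
      case True
      have "(t + d) div int T = m" "(t + d) mod int T = s"
        using divmod_aux[of s "int T" m] True s by (simp_all add: s_def)
      then show ?thesis using Sd S'(2) block0[of "nat s" T S' l'] s True
        by (simp add: schedW_def)
    next
      case False
      have "(t + d) div int T = m + 1" "(t + d) mod int T = s - int T"
        using divmod_aux[of "s - int T" "int T" "m+1"] False s by (simp_all add: s_def algebra_simps)
      then show ?thesis using Sd S'(3) block1[of "nat (s - int T)" T S' l'] s False
        by (simp add: schedW_def)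
    qed
    show False by (rule key[OF S'(1) a]) (use b in \<open>simp add: s_def\<close>)
  next
    case False
    obtain S' where S': "collision_free I D S'" "W (m - 1) = block S' T 0" "W m = block S' T 1"
      using E[of "m - 1"] unfolding sched_edges_def by auto
    have a: "S' l (t - (m - 1) * int T)"
      using Sl S'(3) block1[of "nat r" T S' l] r by (simp add: t algebra_simps)
    define s where "s = t + d - (m - 1) * int T"
    have s: "0 \<le> s" "s < int T" using False dT r by (auto simp: s_def t algebra_simps)
    have "(t + d) div int T = m - 1" "(t + d) mod int T = s"
      using divmod_aux[of s "int T" "m - 1"] s by (simp_all add: s_def)
    then have b: "S' l' s" using Sd S'(2) block0[of "nat s" T S' l'] s
      by (simp add: schedW_def)
    show False by (rule key[OF S'(1) a]) (use b in \<open>simp add: s_def\<close>)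
  qed
qed



lemma periodic_iter: "(\<And>t. f (t + P) = f t) \<Longrightarrow> f (t + q * P) = f (t::nat)"
  by (induction q arbitrary: t) (auto simp: add.assoc[symmetric])

lemma periodic_sum:
  fixes f :: "nat \<Rightarrow> real"
  assumes per: "\<And>t. f (t + P) = f t"
  shows "(\<Sum>t< q * P + r. f t) = real q * (\<Sum>t<P. f t) + (\<Sum>t<r. f t)"
proof -
  have sh: "(\<Sum>t<q * P + r. f t) = (\<Sum>t<q * P. f t) + (\<Sum>t<r. f (q * P + t))" for q r
    by (induction r) simp_all
  have it: "f (q * P + t) = f t" for q t using periodic_iter[of f P t q] per by (simp add: add.commute)
  have "(\<Sum>t<q * P. f t) = real q * (\<Sum>t<P. f t)"
  proof (induction q)
    case (Suc q)
    have "(\<Sum>t<Suc q * P. f t) = (\<Sum>t<q * P + P. f t)" by (simp add: add.commute)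
    also have "\<dots> = (\<Sum>t<q * P. f t) + (\<Sum>t<P. f t)" using sh[of q P] it by simp
    finally show ?case using Suc by (simp add: algebra_simps)
  qed simp
  then show ?thesis using sh[of q r] it by simp
qed

lemma periodic_avg_lim:
  fixes f :: "nat \<Rightarrow> real"
  assumes per: "\<And>t. f (t + P) = f t" and P: "P > 0"
    and f01: "\<And>t. 0 \<le> f t \<and> f t \<le> 1"
  shows "(\<lambda>N. (1 / real N) * (\<Sum>t<N. f t)) \<longlonglongrightarrow> (\<Sum>t<P. f t) / real P"
proof -
  define c where "c = (\<Sum>t<P. f t)"
  have c: "0 \<le> c" "c \<le> real P" unfolding c_def
    using sum_nonneg[of "{..<P}" f] sum_mono[of "{..<P}" f "\<lambda>_. 1"] f01 by auto
  have bound: "\<bar>(1 / real N) * (\<Sum>t<N. f t) - c / real P\<bar> \<le> real P / real N" if N: "N > 0" for N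
  proof -
    define q where "q = N div P"
    define r where "r = N mod P"
    have Nq: "N = q * P + r" by (simp add: q_def r_def)
    have rP: "r < P" using P by (simp add: r_def)
    define e where "e = (\<Sum>t<r. f t)"
    have e: "0 \<le> e" "e \<le> real r" unfolding e_def
      using sum_nonneg[of "{..<r}" f] sum_mono[of "{..<r}" f "\<lambda>_. 1"] f01 by auto
    have sumN: "(\<Sum>t<N. f t) = real q * c + e"
      unfolding Nq c_def e_def by (rule periodic_sum[of f P, OF per])
    have "(1 / real N) * (\<Sum>t<N. f t) - c / real P = (e - real r * c / real P) / real N"
    proof -
      have RN: "real N = real q * real P + real r" using Nq by simp
      have 1: "(1 / real N) * (real q * c + e) - c / real P = ((real q * c + e) - real N * c / real P) / real N"
        using N by (simp add: field_simps)
      have 2: "(real q * c + e) - real N * c / real P = e - real r * c / real P"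
        using P unfolding RN by (simp add: field_simps)
      show ?thesis unfolding sumN 1 2 ..
    qed
    moreover have "\<bar>e - real r * c / real P\<bar> \<le> real P"
    proof -
      have "real r * c / real P \<le> real r" using c P
        by (simp add: divide_le_eq mult_left_mono)
      moreover have "0 \<le> real r * c / real P" using c by simp
      ultimately show ?thesis using e rP by linarith
    qed
    ultimately show ?thesis using N by (simp add: divide_right_mono abs_div)
  qed
  have "(\<lambda>N. (1 / real N) * (\<Sum>t<N. f t) - c / real P) \<longlonglongrightarrow> 0"
  proof (rule Lim_null_comparison)
    show "\<forall>\<^sub>F N in sequentially. norm ((1 / real N) * (\<Sum>t<N. f t) - c / real P) \<le> real P / real N"
      using bound eventually_sequentially[of "\<lambda>N. N > 0"]
      by (metis (no_types, lifting) eventually_sequentiallyI less_le_trans real_norm_def zero_less_one)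
    show "(\<lambda>N. real P / real N) \<longlonglongrightarrow> 0" by (rule lim_const_over_n)
  qed
  then show ?thesis unfolding c_def by (rule LIM_zero_cancel)
qed



definition cnt :: "nat \<Rightarrow> ('l \<Rightarrow> nat \<Rightarrow> bool) \<Rightarrow> 'l \<Rightarrow> real" where
  "cnt T B l = real (card {j. j < T \<and> B l j})"

definition wrate :: "nat \<Rightarrow> ('l \<Rightarrow> nat \<Rightarrow> bool) list \<Rightarrow> 'l \<Rightarrow> real" where
  "wrate T w l = sum_list (map (\<lambda>B. cnt T B l) w) / (real (length w) * real T)"

definition validw :: "('l \<Rightarrow> 'l set set) \<Rightarrow> ('l \<Rightarrow> 'l \<Rightarrow> int) \<Rightarrow> nat \<Rightarrow> ('l \<Rightarrow> nat \<Rightarrow> bool) list \<Rightarrow> bool" where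
  "validw I D T w \<longleftrightarrow> w \<noteq> [] \<and> successively (\<lambda>A B. (A,B) \<in> sched_edges I D T) (w @ [hd w])"

definition Wof :: "('l \<Rightarrow> nat \<Rightarrow> bool) list \<Rightarrow> int \<Rightarrow> 'l \<Rightarrow> nat \<Rightarrow> bool" where
  "Wof w m = w ! nat (m mod int (length w))"

lemma sum_ind_cnt: "(\<Sum>j<T. if B l j then 1 else (0::real)) = cnt T B l"
proof -
  have "(\<Sum>j<T. if B l j then 1 else (0::real)) = real (card ({..<T} \<inter> Collect (B l)))"
    by (simp add: sum.If_cases)
  also have "{..<T} \<inter> Collect (B l) = {j. j < T \<and> B l j}" by auto
  finally show ?thesis by (simp add: cnt_def)
qed

lemma validw_edges:
  assumes "validw I D T w"
  shows "(Wof w m, Wof w (m+1)) \<in> sched_edges I D T"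
proof -
  let ?n = "length w"
  have n: "?n > 0" using assms by (simp add: validw_def)
  define i where "i = nat (m mod int ?n)"
  have i: "i < ?n" using n by (simp add: i_def nat_less_iff)
  have im: "int i = m mod int ?n" using n by (simp add: i_def)
  have "nat ((m+1) mod int ?n) = Suc i mod ?n"
  proof -
    have "(m+1) mod int ?n = (int i + 1) mod int ?n" by (metis im mod_add_left_eq)
    also have "\<dots> = int (Suc i mod ?n)" by (metis of_nat_Suc zmod_int add.commute)
    finally show ?thesis by simp
  qed
  then have W1: "Wof w (m+1) = w ! (Suc i mod ?n)" by (simp add: Wof_def)
  have W0: "Wof w m = w ! i" by (simp add: Wof_def i_def)
  have succ: "(\<lambda>A B. (A,B) \<in> sched_edges I D T) ((w @ [hd w]) ! i) ((w @ [hd w]) ! Suc i)"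
    using assms i unfolding validw_def successively_conv_nth by auto
  show ?thesis
  proof (cases "Suc i < ?n")
    case True
    then show ?thesis using succ i W0 W1 by (simp add: nth_append)
  next
    case False
    then have "Suc i = ?n" using i by simp
    then show ?thesis using succ i W0 W1 n by (simp add: nth_append hd_conv_nth)
  qed
qed

lemma word_rate:
  fixes I :: "'l::finite \<Rightarrow> 'l set set"
  assumes bin: "binary_profile I" and TD: "character I D \<le> T" and T1: "1 \<le> T"
    and v: "validw I D T w"
  shows "is_rate_vector I D (schedW T (Wof w)) (\<chi> l. wrate T w l)"
  unfolding is_rate_vector_def
proof
  fix l
  let ?S = "schedW T (Wof w)"
  let ?n = "length w"
  have n: "?n > 0" using v by (simp add: validw_def)
  have cf: "collision_free I D ?S"
    by (rule schedW_cf[of I D T "Wof w", OF bin TD T1 validw_edges[OF v]])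
  define f where "f = (\<lambda>t::nat. if ?S l (int t) then 1 else (0::real))"
  have avg: "avg_success I D ?S l = (\<lambda>N. (1 / real N) * (\<Sum>t<N. f t))"
    using cf unfolding avg_success_def f_def collision_free_def by (intro ext) (metis (no_types))
  have per: "f (t + ?n * T) = f t" for t
  proof -
    have "int (t + ?n * T) div int T = int t div int T + int ?n"
      using T1 by (simp add: add.commute)
    moreover have "int (t + ?n * T) mod int T = int t mod int T"
      by simp
    moreover have "(int t div int T + int ?n) mod int ?n = int t div int T mod int ?n" by simp
    ultimately show ?thesis by (simp add: f_def schedW_def Wof_def)
  qed
  have f01: "0 \<le> f t \<and> f t \<le> 1" for t by (simp add: f_def)
  have lim: "(\<lambda>N. (1 / real N) * (\<Sum>t<N. f t)) \<longlonglongrightarrow> (\<Sum>t< ?n * T. f t) / real (?n * T)"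
    by (rule periodic_avg_lim[of f "?n * T", OF per]) (use n T1 f01 in auto)
  have "(\<Sum>t< ?n * T. f t) = (\<Sum>i<?n. \<Sum>t\<in>{i * T..<i * T + T}. f t)"
    by (rule sum.nat_group[symmetric])
  also have "\<dots> = (\<Sum>i<?n. cnt T (w ! i) l)"
  proof (rule sum.cong[OF refl])
    fix i assume i: "i \<in> {..<?n}"
    have "(\<Sum>t\<in>{i * T..<i * T + T}. f t) = (\<Sum>j\<in>{0..<T}. f (j + i * T))"
      using sum.shift_bounds_nat_ivl[of f 0 "i*T" T] by (simp add: add.commute)
    also have "\<dots> = (\<Sum>j<T. if (w ! i) l j then 1 else 0)"
    proof (rule sum.cong)
      fix j assume j: "j \<in> {..<T}"
      have "int (j + i * T) div int T = int i" "int (j + i * T) mod int T = int j"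
        using divmod_aux[of "int j" "int T" "int i"] j by (simp_all add: add.commute)
      moreover have "int i mod int ?n = int i" using i by simp
      ultimately show "f (j + i * T) = (if (w ! i) l j then 1 else 0)"
        by (simp add: f_def schedW_def Wof_def)
    qed auto
    finally show "(\<Sum>t\<in>{i * T..<i * T + T}. f t) = cnt T (w ! i) l" by (simp add: sum_ind_cnt)
  qed
  also have "\<dots> = sum_list (map (\<lambda>B. cnt T B l) w)"
    by (simp add: sum_list_sum_nth atLeast0LessThan)
  finally have "(\<Sum>t< ?n * T. f t) / real (?n * T) = wrate T w l"
    by (simp add: wrate_def)
  then show "avg_success I D ?S l \<longlonglongrightarrow> (\<chi> l. wrate T w l) $ l"
    using lim avg by simp
qed



definition goodZ :: "('l \<Rightarrow> 'l set set) \<Rightarrow> ('l \<Rightarrow> 'l \<Rightarrow> int) \<Rightarrow> nat \<Rightarrow> ('l \<Rightarrow> nat \<Rightarrow> bool) list \<Rightarrow> bool" where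
  "goodZ I D T x \<longleftrightarrow> successively (\<lambda>A B. (A,B) \<in> sched_edges I D T) (x @ [Zb]) \<and>
     (x \<noteq> [] \<longrightarrow> (Zb, hd x) \<in> sched_edges I D T)"

lemma validw_last_hd:
  assumes "validw I D T u"
  shows "(last u, hd u) \<in> sched_edges I D T"
  using assms unfolding validw_def by (auto simp: successively_append_iff)

lemma goodZ_rep:
  assumes v: "validw I D T u"
  shows "goodZ I D T (concat (replicate a u))"
proof (induction a)
  case 0
  then show ?case by (simp add: goodZ_def)
next
  case (Suc a)
  have ne: "u \<noteq> []" using v by (simp add: validw_def)
  have lh: "(last u, hd u) \<in> sched_edges I D T" by (rule validw_last_hd[OF v])
  have su: "successively (\<lambda>A B. (A,B) \<in> sched_edges I D T) u"
    using v unfolding validw_def by (simp add: successively_append_iff)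
  let ?x = "concat (replicate a u)"
  have hx: "?x \<noteq> [] \<Longrightarrow> hd ?x = hd u" using ne by (cases a) auto
  have link: "(last u, hd (?x @ [Zb])) \<in> sched_edges I D T"
    using lh edge_Z1[OF lh] hx by (cases "?x = []") auto
  have "successively (\<lambda>A B. (A,B) \<in> sched_edges I D T) (u @ (?x @ [Zb]))"
    using su Suc link ne unfolding goodZ_def successively_append_iff by auto
  moreover have "(Zb, hd u) \<in> sched_edges I D T" by (rule edge_Z2[OF lh])
  ultimately show ?case using ne by (simp add: goodZ_def)
qed

lemma goodZ_concat:
  assumes "goodZ I D T x" "goodZ I D T y"
  shows "goodZ I D T (x @ [Zb] @ y)"
proof -
  have l: "(Zb, hd (y @ [Zb])) \<in> sched_edges I D T"
    using assms(2) edge_ZZ by (cases y) (auto simp: goodZ_def)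
  have "successively (\<lambda>A B. (A,B) \<in> sched_edges I D T) ((x @ [Zb]) @ (y @ [Zb]))"
    using assms l unfolding goodZ_def successively_append_iff by auto
  moreover have "(Zb, hd (x @ [Zb] @ y)) \<in> sched_edges I D T"
    using assms(1) edge_ZZ by (cases x) (auto simp: goodZ_def)
  ultimately show ?thesis by (simp add: goodZ_def)
qed

lemma goodZ_valid:
  assumes "goodZ I D T x"
  shows "validw I D T (x @ [Zb])"
proof -
  have "(Zb, hd (x @ [Zb])) \<in> sched_edges I D T"
    using assms edge_ZZ by (cases x) (auto simp: goodZ_def)
  then show ?thesis using assms unfolding validw_def goodZ_def
    by (simp add: successively_append_iff)
qed

lemma cnt_le: "cnt T B l \<le> real T"
proof -
  have "card {j. j < T \<and> B l j} \<le> card {..<T}" by (rule card_mono) auto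
  then show ?thesis by (simp add: cnt_def)
qed

lemma cnt_Zb: "cnt T Zb l = 0" by (simp add: cnt_def Zb_def)

lemma wrate_bounds:
  assumes "w \<noteq> []" "T \<ge> 1"
  shows "0 \<le> wrate T w l" "wrate T w l \<le> 1"
proof -
  have s0: "0 \<le> sum_list (map (\<lambda>B. cnt T B l) w)"
    by (rule sum_list_nonneg) (auto simp: cnt_def)
  have "sum_list (map (\<lambda>B. cnt T B l) w) \<le> sum_list (map (\<lambda>B. real T) w)"
    by (rule sum_list_mono) (rule cnt_le)
  then have s1: "sum_list (map (\<lambda>B. cnt T B l) w) \<le> real (length w) * real T"
    by (simp add: sum_list_triv)
  have pos: "real (length w) * real T > 0" using assms by simp
  show "0 \<le> wrate T w l" using s0 pos by (simp add: wrate_def)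
  show "wrate T w l \<le> 1" using s1 pos by (simp add: wrate_def)
qed

lemma sum_rep: "sum_list (map f (concat (replicate a u))) = real a * sum_list (map f u)"
  for f :: "_ \<Rightarrow> real"
  by (induction a) (simp_all add: algebra_simps)

lemma mix_bound:
  fixes r1 r2 u v L :: real and M :: nat
  assumes r: "0 \<le> r1" "r1 \<le> 1" "0 \<le> r2" "r2 \<le> 1" and L: "1 \<le> L"
    and uv: "0 \<le> u" "0 \<le> v" "u + v = 1"
  shows "u * r1 + v * r2 - 4 / (real M + 2) \<le>
     L * (real (nat \<lfloor>u * real M\<rfloor>) * r1 + real (nat \<lfloor>v * real M\<rfloor>) * r2) /
       ((real (nat \<lfloor>u * real M\<rfloor>) + real (nat \<lfloor>v * real M\<rfloor>)) * L + 2)"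
proof -
  define p where "p = real (nat \<lfloor>u * real M\<rfloor>)"
  define q where "q = real (nat \<lfloor>v * real M\<rfloor>)"
  have p: "u * real M - 1 \<le> p" "p \<le> u * real M" "0 \<le> p"
    using uv unfolding p_def by (auto simp: of_nat_nat)
  have q: "v * real M - 1 \<le> q" "q \<le> v * real M" "0 \<le> q"
    using uv unfolding q_def by (auto simp: of_nat_nat)
  define N where "N = p * r1 + q * r2"
  have N0: "0 \<le> N" using p q r by (simp add: N_def)
  have pq: "p + q \<le> real M"
  proof -
    have "u * real M + v * real M = (u+v) * real M" by (simp add: algebra_simps)
    then show ?thesis using p q uv(3) by simp
  qed
  have den: "(p + q) * L + 2 \<le> (real M + 2) * L" "0 < (p + q) * L + 2"
  proof -
    have a: "(p+q)*L \<le> real M * L" using pq L by (intro mult_right_mono) auto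
    have b: "0 \<le> (p+q)*L" using p q L by simp
    show "(p + q) * L + 2 \<le> (real M + 2) * L" using a L by (simp add: algebra_simps)
    show "0 < (p + q) * L + 2" using b by simp
  qed
  have "N / (real M + 2) \<le> L * N / ((p + q) * L + 2)"
  proof -
    have "N * ((p + q) * L + 2) \<le> N * ((real M + 2) * L)"
      using den(1) N0 by (rule mult_left_mono)
    also have "\<dots> = L * N * (real M + 2)" by (simp add: algebra_simps)
    finally show ?thesis using den(2) by (simp add: divide_simps)
  qed
  moreover have "u * r1 + v * r2 - 4 / (real M + 2) \<le> N / (real M + 2)"
  proof -
    define X where "X = u * r1 + v * r2"
    have "N \<ge> (u * real M - 1) * r1 + (v * real M - 1) * r2"
      unfolding N_def using p q r by (intro add_mono mult_right_mono) auto
    moreover have "(u * real M - 1) * r1 + (v * real M - 1) * r2 = real M * X - r1 - r2"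
      by (simp add: algebra_simps X_def)
    moreover have "u * r1 \<le> u" "v * r2 \<le> v" using r uv by (simp_all add: mult_left_le)
    then have "X \<le> 1" using uv by (simp add: X_def)
    moreover have "(X - 4 / (real M + 2)) * (real M + 2) = real M * X + 2 * X - 4"
      by (simp add: field_simps)
    ultimately have "N \<ge> (X - 4 / (real M + 2)) * (real M + 2)"
      using r by linarith
    then show ?thesis unfolding X_def[symmetric] by (simp add: divide_simps algebra_simps)
  qed
  ultimately show ?thesis unfolding N_def p_def q_def by linarith
qed



lemma cycle_valid:
  assumes c: "is_cycle I D T As"
  shows "validw I D T (butlast As)" "\<And>l. wrate T (butlast As) l = cycle_rate T As $ l"
proof -
  have len: "length As \<ge> 2" and lh: "last As = hd As"
    and e: "\<And>i. i + 1 < length As \<Longrightarrow> (As ! i, As ! (i + 1)) \<in> sched_edges I D T"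
    using c unfolding is_cycle_def by auto
  have ne: "As \<noteq> []" "butlast As \<noteq> []" using len by (auto simp: butlast_conv_take)
  have hb: "hd (butlast As) = hd As" using len by (simp add: hd_conv_nth nth_butlast ne)
  have eq: "butlast As @ [hd (butlast As)] = As"
    using ne hb lh by (metis append_butlast_last_id)
  have "successively (\<lambda>A B. (A,B) \<in> sched_edges I D T) As"
    unfolding successively_conv_nth using e by auto
  then show "validw I D T (butlast As)" unfolding validw_def using eq ne by simp
  fix l
  define k where "k = length As - 1"
  have lb: "length (butlast As) = k" by (simp add: k_def)
  have "sum_list (map (\<lambda>B. cnt T B l) (butlast As)) = (\<Sum>i<k. cnt T (As ! i) l)"
    by (simp add: sum_list_sum_nth lb atLeast0LessThan nth_butlast k_def)
  then show "wrate T (butlast As) l = cycle_rate T As $ l"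
    by (simp add: wrate_def cycle_rate_def Let_def lb k_def cnt_def)
qed

definition Aset :: "('l::finite \<Rightarrow> 'l set set) \<Rightarrow> ('l \<Rightarrow> 'l \<Rightarrow> int) \<Rightarrow> nat \<Rightarrow> (real^'l) set" where
  "Aset I D T = {R. (\<forall>l. 0 \<le> R $ l) \<and>
     (\<forall>\<epsilon>>0. \<exists>w. validw I D T w \<and> (\<forall>l. R $ l - \<epsilon> \<le> wrate T w l))}"

lemma Aset_achievable:
  fixes I :: "'l::finite \<Rightarrow> 'l set set"
  assumes bin: "binary_profile I" and TD: "character I D \<le> T" and T1: "1 \<le> T"
  shows "Aset I D T \<subseteq> achievable_region I D"
proof
  fix R assume R: "R \<in> Aset I D T"
  show "R \<in> achievable_region I D"
    unfolding achievable_region_def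
  proof (intro CollectI conjI allI impI)
    show "0 \<le> R $ l" for l using R by (simp add: Aset_def)
    fix \<epsilon> :: real assume e: "\<epsilon> > 0"
    then obtain w where w: "validw I D T w" "\<forall>l. R $ l - \<epsilon> \<le> wrate T w l"
      using R unfolding Aset_def by blast
    show "\<exists>S RS. is_rate_vector I D S RS \<and> (\<forall>l. R $ l - \<epsilon> \<le> RS $ l)"
      using word_rate[OF bin TD T1 w(1)] w(2)
      by (intro exI[of _ "schedW T (Wof w)"] exI[of _ "\<chi> l. wrate T w l"]) auto
  qed
qed

lemma cycle_in_Aset:
  assumes c: "is_cycle I D T As" and T1: "1 \<le> T"
  shows "cycle_rate T As \<in> Aset I D T"
proof -
  have v: "validw I D T (butlast As)" by (rule cycle_valid(1)[OF c])
  have ne: "butlast As \<noteq> []" using v by (simp add: validw_def)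
  show ?thesis unfolding Aset_def
  proof (intro CollectI conjI allI impI)
    show "0 \<le> cycle_rate T As $ l" for l
      using wrate_bounds(1)[OF ne T1, of l] cycle_valid(2)[OF c, of l] by simp
    show "\<exists>w. validw I D T w \<and> (\<forall>l. cycle_rate T As $ l - \<epsilon> \<le> wrate T w l)"
      if "\<epsilon> > 0" for \<epsilon>
      using v cycle_valid(2)[OF c] that by (intro exI[of _ "butlast As"]) auto
  qed
qed



lemma Aset_convex:
  fixes I :: "'l::finite \<Rightarrow> 'l set set"
  assumes T1: "1 \<le> T"
  shows "convex (Aset I D T)"
  unfolding convex_def
proof (intro ballI allI impI)
  fix x y :: "real^'l" and u v :: real
  assume x: "x \<in> Aset I D T" and y: "y \<in> Aset I D T" and u: "0 \<le> u" and v: "0 \<le> v" and uv: "u + v = 1"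
  show "u *\<^sub>R x + v *\<^sub>R y \<in> Aset I D T"
    unfolding Aset_def
  proof (intro CollectI conjI allI impI)
    show "0 \<le> (u *\<^sub>R x + v *\<^sub>R y) $ l" for l
      using x y u v by (simp add: Aset_def)
    fix \<epsilon> :: real assume e: "\<epsilon> > 0"
    obtain w1 where w1: "validw I D T w1" "\<forall>l. x $ l - \<epsilon>/2 \<le> wrate T w1 l"
      using x e unfolding Aset_def mem_Collect_eq by (metis half_gt_zero)
    obtain w2 where w2: "validw I D T w2" "\<forall>l. y $ l - \<epsilon>/2 \<le> wrate T w2 l"
      using y e unfolding Aset_def mem_Collect_eq by (metis half_gt_zero)
    define n1 where "n1 = length w1"
    define n2 where "n2 = length w2"
    have ne1: "w1 \<noteq> []" and ne2: "w2 \<noteq> []" using w1 w2 by (auto simp: validw_def)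
    then have n: "n1 \<ge> 1" "n2 \<ge> 1" by (auto simp: n1_def n2_def Suc_le_eq)
    define M where "M = nat \<lceil>8 / \<epsilon>\<rceil>"
    have M: "8 / \<epsilon> \<le> real M" unfolding M_def by linarith
    have M4: "4 / (real M + 2) \<le> \<epsilon> / 2"
    proof -
      have "8 \<le> \<epsilon> * (real M + 2)" using M e by (simp add: divide_le_eq algebra_simps)
      then show ?thesis using e by (simp add: divide_simps)
    qed
    define p where "p = nat \<lfloor>u * real M\<rfloor>"
    define q where "q = nat \<lfloor>v * real M\<rfloor>"
    define xs where "xs = concat (replicate (p * n2) w1)"
    define ys where "ys = concat (replicate (q * n1) w2)"
    define w where "w = (xs @ [Zb] @ ys) @ [Zb]"
    have vw: "validw I D T w" unfolding w_def xs_def ys_def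
      by (intro goodZ_valid goodZ_concat goodZ_rep w1(1) w2(1))
    have rate: "wrate T w l = real (n1 * n2) * (real p * wrate T w1 l + real q * wrate T w2 l) /
        ((real p + real q) * real (n1 * n2) + 2)" for l
    proof -
      define s1 where "s1 = sum_list (map (\<lambda>B. cnt T B l) w1)"
      define s2 where "s2 = sum_list (map (\<lambda>B. cnt T B l) w2)"
      have Tp: "real T > 0" using T1 by simp
      have r1: "wrate T w1 l = s1 / (real n1 * real T)" by (simp add: wrate_def s1_def n1_def)
      have r2: "wrate T w2 l = s2 / (real n2 * real T)" by (simp add: wrate_def s2_def n2_def)
      have sw: "sum_list (map (\<lambda>B. cnt T B l) w) = real (p * n2) * s1 + real (q * n1) * s2"
        by (simp add: w_def xs_def ys_def sum_rep s1_def s2_def cnt_Zb)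
      have lw: "length w = p * n2 * n1 + q * n1 * n2 + 2"
        by (simp add: w_def xs_def ys_def length_concat sum_list_replicate n1_def n2_def)
      have n0: "real n1 > 0" "real n2 > 0" using n by auto
      have num: "real (n1 * n2) * (real p * (s1 / (real n1 * real T)) + real q * (s2 / (real n2 * real T)))
          = (real (p * n2) * s1 + real (q * n1) * s2) / real T"
        using n0 Tp by (simp add: field_simps)
      have den: "real (p * n2 * n1 + q * n1 * n2 + 2) = (real p + real q) * real (n1 * n2) + 2"
        by (simp add: algebra_simps)
      show ?thesis
        unfolding wrate_def[of T w] sw lw r1 r2 num den
        by (rule divide_divide_eq_left'[symmetric])
    qed
    show "\<exists>w. validw I D T w \<and> (\<forall>l. (u *\<^sub>R x + v *\<^sub>R y) $ l - \<epsilon> \<le> wrate T w l)"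
    proof (intro exI[of _ w] conjI vw allI)
      fix l
      have b1: "0 \<le> wrate T w1 l" "wrate T w1 l \<le> 1" using wrate_bounds[OF ne1 T1] by auto
      have b2: "0 \<le> wrate T w2 l" "wrate T w2 l \<le> 1" using wrate_bounds[OF ne2 T1] by auto
      have "1 * 1 \<le> n1 * n2" by (rule mult_le_mono[OF n])
      then have L: "1 \<le> real (n1 * n2)" by (metis of_nat_1 of_nat_le_iff mult_1)
      have mb: "u * wrate T w1 l + v * wrate T w2 l - 4 / (real M + 2) \<le> wrate T w l"
        unfolding rate p_def q_def by (rule mix_bound[OF b1 b2 L u v uv])
      have "u * (x $ l - \<epsilon>/2) \<le> u * wrate T w1 l" using w1(2) u by (simp add: mult_left_mono)
      moreover have "v * (y $ l - \<epsilon>/2) \<le> v * wrate T w2 l" using w2(2) v by (simp add: mult_left_mono)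
      moreover have "u * (x $ l - \<epsilon>/2) + v * (y $ l - \<epsilon>/2) = u * x $ l + v * y $ l - \<epsilon>/2"
        using uv by (simp add: algebra_simps) (metis distrib_left mult.right_neutral)
      moreover have "(u *\<^sub>R x + v *\<^sub>R y) $ l = u * x $ l + v * y $ l" by simp
      ultimately show "(u *\<^sub>R x + v *\<^sub>R y) $ l - \<epsilon> \<le> wrate T w l"
        using mb M4 by linarith
    qed
  qed
qed

theorem theorem7:
  fixes I :: "'l::finite \<Rightarrow> 'l set set" and D :: "'l \<Rightarrow> 'l \<Rightarrow> int" and T :: nat
  assumes "wf_network I"
    and "binary_profile I"
    and "T \<ge> max (character I D) 1"
  shows "graph_region I D T \<subseteq> achievable_region I D"
proof -
  have TD: "character I D \<le> T" and T1: "1 \<le> T" using assms(3) by auto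
  have "graph_region I D T \<subseteq> Aset I D T"
    unfolding graph_region_def
    by (rule hull_minimal) (auto intro: cycle_in_Aset[OF _ T1] Aset_convex[OF T1])
  also have "\<dots> \<subseteq> achievable_region I D" by (rule Aset_achievable[OF assms(2) TD T1])
  finally show ?thesis .
qed


end
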